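(* Let $K$ be a finitely generated field of characteristic $0$, let $\lambda$ be the number of roots of unity contained in $K$, let $\overline{K}$ be an algebraic closure of $K$, and let $$\Gamma:=\{x\in\overline{K}^\times : x^n\in K^\times \text{ for some integer } n>0\}.$$ Let $\alpha_1,\dots,\alpha_s\in\Gamma$ be such that $\alpha_1+\cdots+\alpha_s=1$ and no proper subsum of $\alpha_1+\cdots+\alpha_s$ vanishes. Then there exist roots of unity $\xi_1,\dots,\xi_s\in\overline{K}^\times$ such that $\alpha_i^\lambda\xi_i\in K$ for each $i=1,\dots,s$.
   Context: A proper subsum means $\sum_{i\in I}\alpha_i$ for a nonempty subset $I\subsetneq\{1,\dots,s\}$. *)

theory Defs
  imports "HOL-Algebra.Algebraic_Closure_Type"
begin

definition is_subfield :: "'a::field set \<Rightarrow> bool" where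
  "is_subfield F \<longleftrightarrow> 0 \<in> F \<and> 1 \<in> F \<and>
     (\<forall>x\<in>F. \<forall>y\<in>F. x + y \<in> F \<and> x * y \<in> F) \<and>
     (\<forall>x\<in>F. - x \<in> F \<and> inverse x \<in> F)"

definition finitely_generated_field :: "'a::field itself \<Rightarrow> bool" where
  "finitely_generated_field _ \<longleftrightarrow>
     (\<exists>S :: 'a set. finite S \<and> (\<forall>F. is_subfield F \<and> S \<subseteq> F \<longrightarrow> F = UNIV))"

definition root_of_unity :: "'a::field \<Rightarrow> bool" where
  "root_of_unity x \<longleftrightarrow> (\<exists>n::nat. n > 0 \<and> x ^ n = 1)"

end

theory Submission
  imports Defs
begin

definition polyin :: "'a::field set \<Rightarrow> 'a poly \<Rightarrow> bool" where
  "polyin E p \<longleftrightarrow> (\<forall>i. coeff p i \<in> E)"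

definition subr :: "'a::field set \<Rightarrow> bool" where
  "subr E \<longleftrightarrow> 0 \<in> E \<and> 1 \<in> E \<and> (\<forall>x\<in>E. \<forall>y\<in>E. x + y \<in> E \<and> x * y \<in> E) \<and> (\<forall>x\<in>E. - x \<in> E)"

definition adj :: "'a::field set \<Rightarrow> 'a \<Rightarrow> 'a set" where
  "adj E g = {poly p g | p. polyin E p}"

definition homon :: "'a::field set \<Rightarrow> ('a \<Rightarrow> 'a) \<Rightarrow> bool" where
  "homon E t \<longleftrightarrow> t 1 = 1 \<and> (\<forall>x\<in>E. \<forall>y\<in>E. t (x + y) = t x + t y \<and> t (x * y) = t x * t y)"

definition algover :: "'a::field set \<Rightarrow> bool" where
  "algover E \<longleftrightarrow> (\<forall>y. \<exists>p. p \<noteq> 0 \<and> polyin E p \<and> poly p y = 0)"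

lemma sf_subr: "is_subfield E \<Longrightarrow> subr E"
  unfolding is_subfield_def subr_def by auto

lemma subr_0: "subr E \<Longrightarrow> 0 \<in> E" and subr_1: "subr E \<Longrightarrow> 1 \<in> E"
  and subr_add: "subr E \<Longrightarrow> x \<in> E \<Longrightarrow> y \<in> E \<Longrightarrow> x + y \<in> E"
  and subr_mult: "subr E \<Longrightarrow> x \<in> E \<Longrightarrow> y \<in> E \<Longrightarrow> x * y \<in> E"
  and subr_uminus: "subr E \<Longrightarrow> x \<in> E \<Longrightarrow> - x \<in> E"
  unfolding subr_def by auto

lemma subr_diff: "subr E \<Longrightarrow> x \<in> E \<Longrightarrow> y \<in> E \<Longrightarrow> x - y \<in> E"
  using subr_add[of E x "- y"] subr_uminus[of E y] by simp

lemma subr_power: "subr E \<Longrightarrow> x \<in> E \<Longrightarrow> x ^ n \<in> E"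
  by (induction n) (auto intro: subr_mult subr_1)

lemma subr_of_nat: "subr E \<Longrightarrow> of_nat n \<in> E"
  by (induction n) (auto intro: subr_add subr_1 subr_0)

lemma subr_sum: "subr E \<Longrightarrow> (\<And>i. i \<in> A \<Longrightarrow> f i \<in> E) \<Longrightarrow> sum f A \<in> E"
  by (induction A rule: infinite_finite_induct) (auto intro: subr_add subr_0)

lemma sf_inverse: "is_subfield E \<Longrightarrow> x \<in> E \<Longrightarrow> inverse x \<in> E"
  unfolding is_subfield_def by auto

lemma sf_divide: "is_subfield E \<Longrightarrow> x \<in> E \<Longrightarrow> y \<in> E \<Longrightarrow> x / y \<in> E"
  by (simp add: divide_inverse sf_inverse sf_subr subr_mult)

lemma subr_sfI: "subr E \<Longrightarrow> (\<And>x. x \<in> E \<Longrightarrow> x \<noteq> 0 \<Longrightarrow> inverse x \<in> E) \<Longrightarrow> is_subfield E"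
  unfolding subr_def is_subfield_def by (metis inverse_zero)

lemma polyin_0 [simp]: "subr E \<Longrightarrow> polyin E 0"
  unfolding polyin_def by (simp add: subr_0)

lemma polyin_pCons: "polyin E (pCons a p) \<longleftrightarrow> a \<in> E \<and> polyin E p"
  unfolding polyin_def by (auto simp: coeff_pCons split: nat.splits)

lemma polyin_const: "subr E \<Longrightarrow> c \<in> E \<Longrightarrow> polyin E [:c:]"
  by (simp add: polyin_pCons)

lemma polyin_1: "subr E \<Longrightarrow> polyin E 1"
  by (simp add: one_pCons polyin_pCons subr_1)

lemma polyin_X: "subr E \<Longrightarrow> polyin E [:0,1:]"
  by (simp add: polyin_pCons subr_1 subr_0)

lemma polyin_add: "subr E \<Longrightarrow> polyin E p \<Longrightarrow> polyin E q \<Longrightarrow> polyin E (p + q)"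
  unfolding polyin_def by (auto intro: subr_add)

lemma polyin_uminus: "subr E \<Longrightarrow> polyin E p \<Longrightarrow> polyin E (- p)"
  unfolding polyin_def by (auto intro: subr_uminus)

lemma polyin_diff: "subr E \<Longrightarrow> polyin E p \<Longrightarrow> polyin E q \<Longrightarrow> polyin E (p - q)"
  unfolding polyin_def by (auto intro: subr_diff)

lemma polyin_smult: "subr E \<Longrightarrow> c \<in> E \<Longrightarrow> polyin E p \<Longrightarrow> polyin E (smult c p)"
  unfolding polyin_def by (auto intro: subr_mult)

lemma polyin_monom: "subr E \<Longrightarrow> c \<in> E \<Longrightarrow> polyin E (monom c n)"
  unfolding polyin_def by (auto intro: subr_0)

lemma polyin_mult: "subr E \<Longrightarrow> polyin E p \<Longrightarrow> polyin E q \<Longrightarrow> polyin E (p * q)"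
  unfolding polyin_def coeff_mult by (auto intro!: subr_sum subr_mult)

lemma polyin_pderiv: "subr E \<Longrightarrow> polyin E p \<Longrightarrow> polyin E (pderiv p)"
  unfolding polyin_def coeff_pderiv by (metis subr_mult subr_of_nat)

lemma polyin_mono: "polyin E p \<Longrightarrow> E \<subseteq> F \<Longrightarrow> polyin F p"
  unfolding polyin_def by auto

lemma poly_in: "subr E \<Longrightarrow> polyin E p \<Longrightarrow> y \<in> E \<Longrightarrow> poly p y \<in> E"
  by (induction p) (auto simp: polyin_pCons intro: subr_add subr_mult subr_0)

lemma polyin_divmod:
  assumes E: "subr E" and p: "polyin E p" "lead_coeff p = 1"
  shows "polyin E f \<Longrightarrow> \<exists>q r. polyin E q \<and> polyin E r \<and> f = q * p + r \<and> (r = 0 \<or> degree r < degree p)"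
proof (induction "degree f" arbitrary: f rule: less_induct)
  case less
  show ?case
  proof (cases "f = 0 \<or> degree f < degree p")
    case True
    then show ?thesis using less.prems E by (intro exI[of _ 0] exI[of _ f]) auto
  next
    case False
    hence f0: "f \<noteq> 0" and dg: "degree p \<le> degree f" by auto
    have p0: "p \<noteq> 0" using p by auto
    define k where "k = degree f - degree p"
    define c where "c = lead_coeff f"
    have c0: "c \<noteq> 0" using f0 c_def by simp
    define f' where "f' = f - monom c k * p"
    have pf': "polyin E f'" unfolding f'_def
      by (intro polyin_diff polyin_mult polyin_monom E less.prems p) (use less.prems c_def polyin_def in auto)
    have dm: "degree (monom c k * p) = degree f"
      using c0 p0 dg by (simp add: degree_mult_eq degree_monom_eq[OF c0] k_def)
    have lm: "lead_coeff (monom c k * p) = c"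
      using p by (simp add: lead_coeff_mult degree_monom_eq[OF c0])
    have "degree f' \<le> degree f" unfolding f'_def using dm by (intro degree_diff_le) auto
    moreover have "coeff f' (degree f) = 0"
      unfolding f'_def using lm dm c_def by simp
    ultimately have "f' = 0 \<or> degree f' < degree f"
      by (metis le_antisym le_degree not_le leading_coeff_0_iff)
    then obtain q r where qr: "polyin E q" "polyin E r" "f' = q * p + r" "r = 0 \<or> degree r < degree p"
    proof
      assume "f' = 0" thus ?thesis using that[of 0 0] E by auto
    next
      assume "degree f' < degree f"
      from less.hyps[OF this pf'] show ?thesis using that by blast
    qed
    have "f = (q + monom c k) * p + r" using qr(3) unfolding f'_def by (simp add: algebra_simps)
    moreover have "polyin E (q + monom c k)"
      by (intro polyin_add qr polyin_monom E) (use less.prems c_def polyin_def in auto)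
    ultimately show ?thesis using qr by blast
  qed
qed

lemma adj_subr: assumes E: "subr E" shows "subr (adj E g)"
  unfolding subr_def adj_def
proof (intro conjI ballI)
  show "0 \<in> {poly p g |p. polyin E p}" using E by (auto intro!: exI[of _ 0])
  show "1 \<in> {poly p g |p. polyin E p}" using E by (auto intro!: exI[of _ 1] polyin_1)
  fix x y assume "x \<in> {poly p g |p. polyin E p}" "y \<in> {poly p g |p. polyin E p}"
  then obtain p q where pq: "polyin E p" "polyin E q" "x = poly p g" "y = poly q g" by blast
  show "x + y \<in> {poly p g |p. polyin E p}" using pq E by (auto intro!: exI[of _ "p + q"] polyin_add)
  show "x * y \<in> {poly p g |p. polyin E p}" using pq E by (auto intro!: exI[of _ "p * q"] polyin_mult)
  show "- x \<in> {poly p g |p. polyin E p}" using pq E by (auto intro!: exI[of _ "- p"] polyin_uminus)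
qed

lemma E_sub_adj: "subr E \<Longrightarrow> E \<subseteq> adj E g"
  unfolding adj_def by (auto intro!: exI[of _ "[:_:]"] polyin_const)

lemma g_in_adj: "subr E \<Longrightarrow> g \<in> adj E g"
  unfolding adj_def by (auto intro!: exI[of _ "[:0,1:]"] polyin_X)

lemma algover_mono: "algover E \<Longrightarrow> E \<subseteq> F \<Longrightarrow> algover F"
  unfolding algover_def using polyin_mono by blast

lemma alg_const:
  assumes "algover E" "y \<noteq> 0"
  shows "\<exists>p. polyin E p \<and> poly p y = 0 \<and> coeff p 0 \<noteq> 0"
proof -
  have "\<exists>p. polyin E p \<and> poly p y = 0 \<and> coeff p 0 \<noteq> 0" if "p \<noteq> 0" "polyin E p" "poly p y = 0" for p
    using that
  proof (induction "degree p" arbitrary: p rule: less_induct)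
    case (less p)
    show ?case
    proof (cases "coeff p 0 = 0")
      case False thus ?thesis using less.prems by blast
    next
      case True
      obtain a p' where pp: "p = pCons a p'" by (cases p)
      have a: "a = 0" using True pp by simp
      have p'0: "p' \<noteq> 0" using less.prems pp a by auto
      have "degree p' < degree p" using pp p'0 by simp
      moreover have "polyin E p'" using less.prems pp polyin_pCons by blast
      moreover have "poly p' y = 0" using less.prems pp a assms(2) by simp
      ultimately show ?thesis using less.hyps p'0 by blast
    qed
  qed
  thus ?thesis using assms(1) unfolding algover_def by blast
qed

lemma adj_sf:
  assumes sf: "is_subfield E" and al: "algover E"
  shows "is_subfield (adj E g)"
proof (rule subr_sfI)
  have sr: "subr E" using sf sf_subr by blast
  show sa: "subr (adj E g)" using adj_subr sr by blast
  fix y assume y: "y \<in> adj E g" "y \<noteq> 0"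
  obtain p where p: "polyin E p" "poly p y = 0" "coeff p 0 \<noteq> 0" using alg_const[OF al y(2)] by blast
  obtain c p' where pp: "p = pCons c p'" by (cases p)
  have pc: "c \<in> E \<and> polyin E p'" using p(1) unfolding pp polyin_pCons .
  have c0: "c \<noteq> 0" using p(3) unfolding pp by simp
  have p': "polyin (adj E g) p'" using pc polyin_mono E_sub_adj[OF sr] by blast
  have py: "poly p' y \<in> adj E g" using poly_in[OF sa p' y(1)] .
  have eq: "c + y * poly p' y = 0" using p(2) unfolding pp by simp
  have "y * (- poly p' y * inverse c) = - (y * poly p' y) * inverse c" by simp
  also have "- (y * poly p' y) = c" using eq by (metis eq_neg_iff_add_eq_0)
  finally have "y * (- poly p' y * inverse c) = 1" using c0 by simp
  hence "inverse y = - poly p' y * inverse c" by (rule inverse_unique)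
  moreover have "inverse c \<in> adj E g" using sf_inverse[OF sf] pc E_sub_adj[OF sr] by blast
  ultimately show "inverse y \<in> adj E g" using sa py by (simp add: subr_mult subr_uminus)
qed

definition mp :: "'a::field set \<Rightarrow> 'a \<Rightarrow> 'a poly" where
  "mp E g = (SOME p. polyin E p \<and> lead_coeff p = 1 \<and> poly p g = 0 \<and>
     (\<forall>q. q \<noteq> 0 \<and> polyin E q \<and> poly q g = 0 \<longrightarrow> degree p \<le> degree q))"

lemma mp_ex:
  assumes sf: "is_subfield E" and al: "algover E"
  shows "\<exists>p. polyin E p \<and> lead_coeff p = 1 \<and> poly p g = 0 \<and>
     (\<forall>q. q \<noteq> 0 \<and> polyin E q \<and> poly q g = 0 \<longrightarrow> degree p \<le> degree q)"
proof -
  obtain q0 where "q0 \<noteq> 0 \<and> polyin E q0 \<and> poly q0 g = 0" using al unfolding algover_def by blast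
  from ex_has_least_nat[of "\<lambda>q. q \<noteq> 0 \<and> polyin E q \<and> poly q g = 0", OF this, of degree]
  obtain q where q: "q \<noteq> 0" "polyin E q" "poly q g = 0"
    and min: "\<forall>r. r \<noteq> 0 \<and> polyin E r \<and> poly r g = 0 \<longrightarrow> degree q \<le> degree r" by blast
  define p where "p = smult (inverse (lead_coeff q)) q"
  have l: "lead_coeff q \<in> E" "lead_coeff q \<noteq> 0" using q polyin_def by auto
  have "polyin E p" unfolding p_def using sf sf_subr polyin_smult sf_inverse l q by blast
  moreover have "lead_coeff p = 1" using l unfolding p_def by (simp add: lead_coeff_smult)
  moreover have "poly p g = 0" using q unfolding p_def by simp
  moreover have "degree p = degree q" using l unfolding p_def by simp
  ultimately show ?thesis using min by (intro exI[of _ p]) simp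
qed

context
  fixes E :: "'a::field set" and g :: 'a
  assumes sf: "is_subfield E" and al: "algover E"
begin

lemma mp_props: "polyin E (mp E g)" "lead_coeff (mp E g) = 1" "poly (mp E g) g = 0"
   "\<And>q. q \<noteq> 0 \<Longrightarrow> polyin E q \<Longrightarrow> poly q g = 0 \<Longrightarrow> degree (mp E g) \<le> degree q"
  using someI_ex[OF mp_ex[OF sf al, of g]] unfolding mp_def[symmetric] by blast+

lemma mp_nz: "mp E g \<noteq> 0"
  using mp_props(2) by auto

lemma mp_deg: "degree (mp E g) \<ge> 1"
proof (rule ccontr)
  assume "\<not> ?thesis"
  hence "degree (mp E g) = 0" by simp
  hence "mp E g = [:lead_coeff (mp E g):]" by (metis degree_0_id)
  hence "mp E g = 1" using mp_props(2) by (simp add: one_pCons)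
  thus False using mp_props(3) by simp
qed

lemma mp_dvd:
  assumes f: "polyin E f" "poly f g = 0"
  shows "\<exists>q. polyin E q \<and> f = q * mp E g"
proof -
  obtain q r where qr: "polyin E q" "polyin E r" "f = q * mp E g + r" "r = 0 \<or> degree r < degree (mp E g)"
    using polyin_divmod[OF sf_subr[OF sf] mp_props(1,2) f(1)] by blast
  have "poly r g = 0" using qr(3) f(2) mp_props(3) by simp
  have "r = 0"
  proof (rule ccontr)
    assume "r \<noteq> 0"
    hence "degree (mp E g) \<le> degree r" using mp_props(4)[of r] qr(2) \<open>poly r g = 0\<close> by blast
    thus False using qr(4) \<open>r \<noteq> 0\<close> by simp
  qed
  thus ?thesis using qr by auto
qed

end

context
  fixes E :: "'a::field set" and t :: "'a \<Rightarrow> 'a"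
  assumes sf: "is_subfield E" and h: "homon E t"
begin

lemma sr: "subr E" using sf sf_subr by blast

lemma hom_1: "t 1 = 1" using h homon_def by blast
lemma hom_add: "x \<in> E \<Longrightarrow> y \<in> E \<Longrightarrow> t (x + y) = t x + t y" using h homon_def by blast
lemma hom_mult: "x \<in> E \<Longrightarrow> y \<in> E \<Longrightarrow> t (x * y) = t x * t y" using h homon_def by blast

lemma hom_0: "t 0 = 0"
  using hom_add[of 0 0] subr_0[OF sr] by (metis add.right_neutral add_left_cancel)

lemma hom_uminus: "x \<in> E \<Longrightarrow> t (- x) = - t x"
  using hom_add[of x "- x"] subr_uminus[OF sr] hom_0 by (metis add.right_inverse minus_unique)

lemma hom_diff: "x \<in> E \<Longrightarrow> y \<in> E \<Longrightarrow> t (x - y) = t x - t y"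
  using hom_add[of x "- y"] hom_uminus[of y] subr_uminus[OF sr] by simp

lemma hom_inj0: "x \<in> E \<Longrightarrow> t x = 0 \<Longrightarrow> x = 0"
proof (rule ccontr)
  assume x: "x \<in> E" "t x = 0" "x \<noteq> 0"
  have "t (x * inverse x) = t x * t (inverse x)" using hom_mult x(1) sf_inverse[OF sf x(1)] by blast
  thus False using x hom_1 by simp
qed

lemma hom_inj: "x \<in> E \<Longrightarrow> y \<in> E \<Longrightarrow> t x = t y \<Longrightarrow> x = y"
  using hom_inj0[of "x - y"] hom_diff subr_diff[OF sr] by simp

lemma hom_sum: "(\<And>i. i \<in> A \<Longrightarrow> f i \<in> E) \<Longrightarrow> t (sum f A) = (\<Sum>i\<in>A. t (f i))"
proof (induction A rule: infinite_finite_induct)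
  case (insert a A)
  thus ?case using hom_add[of "f a" "sum f A"] subr_sum[OF sr, of A f] by simp
qed (auto simp: hom_0)

lemma hom_power: "x \<in> E \<Longrightarrow> t (x ^ n) = t x ^ n"
  by (induction n) (auto simp: hom_1 hom_mult subr_power[OF sr])

lemma hom_inverse: "x \<in> E \<Longrightarrow> t (inverse x) = inverse (t x)"
proof (cases "x = 0")
  case True thus ?thesis by (simp add: hom_0)
next
  case False
  assume x: "x \<in> E"
  have "t (x * inverse x) = t x * t (inverse x)" using hom_mult x sf_inverse[OF sf x] by blast
  hence "t x * t (inverse x) = 1" using False hom_1 by simp
  thus ?thesis by (metis inverse_unique)
qed

lemma map_add: "polyin E p \<Longrightarrow> polyin E q \<Longrightarrow> map_poly t (p + q) = map_poly t p + map_poly t q"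
  by (rule poly_eqI) (auto simp: coeff_map_poly hom_0 hom_add polyin_def)

lemma map_diff: "polyin E p \<Longrightarrow> polyin E q \<Longrightarrow> map_poly t (p - q) = map_poly t p - map_poly t q"
  by (rule poly_eqI) (auto simp: coeff_map_poly hom_0 hom_diff polyin_def)

lemma map_mult: "polyin E p \<Longrightarrow> polyin E q \<Longrightarrow> map_poly t (p * q) = map_poly t p * map_poly t q"
  by (rule poly_eqI) (auto simp: coeff_map_poly hom_0 hom_mult polyin_def coeff_mult hom_sum subr_mult[OF sr])

lemma poly_map: "polyin E p \<Longrightarrow> y \<in> E \<Longrightarrow> t (poly p y) = poly (map_poly t p) (t y)"
proof (induction p)
  case (pCons a p)
  hence "a \<in> E" "polyin E p" using polyin_pCons by auto
  thus ?case using pCons poly_in[OF sr] by (simp add: map_poly_pCons hom_0 hom_add hom_mult subr_mult[OF sr])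
qed (simp add: hom_0)

lemma deg_map: "polyin E p \<Longrightarrow> degree (map_poly t p) = degree p"
proof -
  assume p: "polyin E p"
  have z: "coeff (map_poly t p) i = 0 \<longleftrightarrow> coeff p i = 0" for i
    using hom_inj0[of "coeff p i"] p hom_0 by (auto simp: coeff_map_poly polyin_def)
  show ?thesis
    by (rule antisym; rule degree_le; use z coeff_eq_0 in auto)
qed

lemma lead_map: "polyin E p \<Longrightarrow> lead_coeff (map_poly t p) = t (lead_coeff p)"
  using deg_map by (simp add: coeff_map_poly hom_0)

end

lemma homon_id: "homon E (\<lambda>x. x)"
  unfolding homon_def by simp

lemma ext_hom:
  assumes sf: "is_subfield E" and al: "algover E" and h: "homon E t"
    and r: "poly (map_poly t (mp E g)) g' = 0"
  shows "\<exists>t'. homon (adj E g) t' \<and> (\<forall>x\<in>E. t' x = t x) \<and> t' g = g'"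
proof -
  have sr: "subr E" using sf sf_subr by blast
  have key: "poly (map_poly t f1) g' = poly (map_poly t f2) g'"
    if f: "polyin E f1" "polyin E f2" "poly f1 g = poly f2 g" for f1 f2
  proof -
    have "polyin E (f1 - f2)" "poly (f1 - f2) g = 0" using f polyin_diff[OF sr] by auto
    then obtain q where q: "polyin E q" "f1 - f2 = q * mp E g" using mp_dvd[OF sf al] by blast
    have "map_poly t (f1 - f2) = map_poly t q * map_poly t (mp E g)"
      using q map_mult[OF sf h] mp_props(1)[OF sf al] by metis
    hence "poly (map_poly t (f1 - f2)) g' = 0" using r by simp
    thus ?thesis using map_diff[OF sf h f(1,2)] by simp
  qed
  define rep where "rep y = (SOME f. polyin E f \<and> poly f g = y)" for y
  define t' where "t' y = poly (map_poly t (rep y)) g'" for y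
  have teval: "t' (poly f g) = poly (map_poly t f) g'" if f: "polyin E f" for f
  proof -
    have "polyin E (rep (poly f g)) \<and> poly (rep (poly f g)) g = poly f g"
      unfolding rep_def by (rule someI[of _ f]) (use f in auto)
    thus ?thesis unfolding t'_def using key f by blast
  qed
  have t0: "t 0 = 0" using hom_0[OF sf h] .
  have "homon (adj E g) t'"
    unfolding homon_def
  proof (intro conjI ballI)
    have "t' (poly 1 g) = 1" using teval[OF polyin_1[OF sr]] hom_1[OF sf h] by simp
    thus "t' 1 = 1" by simp
    fix x y assume "x \<in> adj E g" "y \<in> adj E g"
    then obtain f1 f2 where f: "polyin E f1" "polyin E f2" "x = poly f1 g" "y = poly f2 g"
      unfolding adj_def by blast
    have "t' (x + y) = t' (poly (f1 + f2) g)" using f by simp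
    also have "\<dots> = poly (map_poly t f1) g' + poly (map_poly t f2) g'"
      using teval[OF polyin_add[OF sr f(1,2)]] map_add[OF sf h f(1,2)] by simp
    finally show "t' (x + y) = t' x + t' y" using f teval by simp
    have "t' (x * y) = t' (poly (f1 * f2) g)" using f by simp
    also have "\<dots> = poly (map_poly t f1) g' * poly (map_poly t f2) g'"
      using teval[OF polyin_mult[OF sr f(1,2)]] map_mult[OF sf h f(1,2)] by simp
    finally show "t' (x * y) = t' x * t' y" using f teval by simp
  qed
  moreover have "\<forall>x\<in>E. t' x = t x"
  proof
    fix x assume x: "x \<in> E"
    have "t' (poly [:x:] g) = poly (map_poly t [:x:]) g'" using teval polyin_const[OF sr x] by blast
    thus "t' x = t x" using t0 by (simp add: map_poly_pCons)
  qed
  moreover have "t' g = g'"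
  proof -
    have "t' (poly [:0,1:] g) = poly (map_poly t [:0,1:]) g'" using teval polyin_X[OF sr] by blast
    thus ?thesis using t0 hom_1[OF sf h] by (simp add: map_poly_pCons)
  qed
  ultimately show ?thesis by blast
qed

lemma ext_hom_ex:
  fixes E :: "'a::alg_closed_field set"
  assumes sf: "is_subfield E" and al: "algover E" and h: "homon E t"
  shows "\<exists>t'. homon (adj E g) t' \<and> (\<forall>x\<in>E. t' x = t x)"
proof -
  have "degree (map_poly t (mp E g)) > 0"
    using deg_map[OF sf h mp_props(1)[OF sf al, of g]] mp_deg[OF sf al, of g] by simp
  then obtain g' where "poly (map_poly t (mp E g)) g' = 0" using alg_closed_imp_poly_has_root by blast
  thus ?thesis using ext_hom[OF sf al h] by blast
qed

fun adjs :: "'a::field set \<Rightarrow> 'a list \<Rightarrow> 'a set" where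
  "adjs E [] = E"
| "adjs E (g # gs) = adjs (adj E g) gs"

lemma adjs_props:
  "is_subfield E \<Longrightarrow> algover E \<Longrightarrow>
    is_subfield (adjs E gs) \<and> algover (adjs E gs) \<and> E \<subseteq> adjs E gs \<and> set gs \<subseteq> adjs E gs"
proof (induction gs arbitrary: E)
  case (Cons g gs)
  have "is_subfield (adj E g)" "algover (adj E g)" "E \<subseteq> adj E g" "g \<in> adj E g"
    using Cons.prems adj_sf algover_mono E_sub_adj g_in_adj sf_subr by blast+
  thus ?case using Cons.IH[of "adj E g"] by auto
qed simp

lemma adjs_ext:
  fixes E :: "'a::alg_closed_field set"
  shows "is_subfield E \<Longrightarrow> algover E \<Longrightarrow> homon E t \<Longrightarrow>
    \<exists>t'. homon (adjs E gs) t' \<and> (\<forall>x\<in>E. t' x = t x)"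
proof (induction gs arbitrary: E t)
  case (Cons g gs)
  obtain t1 where t1: "homon (adj E g) t1" "\<forall>x\<in>E. t1 x = t x" using ext_hom_ex Cons.prems by blast
  have "is_subfield (adj E g)" "algover (adj E g)" "E \<subseteq> adj E g"
    using Cons.prems adj_sf algover_mono E_sub_adj sf_subr by blast+
  from Cons.IH[OF this(1,2) t1(1)] obtain t' where
    A: "homon (adjs (adj E g) gs) t'" "\<forall>x\<in>adj E g. t' x = t1 x" by blast
  show ?case by (rule exI[of _ t']) (use A t1 \<open>E \<subseteq> adj E g\<close> in auto)
qed auto

lemma second_root:
  fixes E :: "'a::{alg_closed_field,field_char_0} set"
  assumes sf: "is_subfield E" and al: "algover E" and x: "x \<notin> E"
  shows "\<exists>x'. x' \<noteq> x \<and> poly (mp E x) x' = 0"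
proof -
  have sr: "subr E" using sf sf_subr by blast
  define p where "p = mp E x"
  have pp: "polyin E p" "lead_coeff p = 1" "poly p x = 0" "degree p \<ge> 1"
    "\<And>q. q \<noteq> 0 \<Longrightarrow> polyin E q \<Longrightarrow> poly q x = 0 \<Longrightarrow> degree p \<le> degree q"
    using mp_props[OF sf al] mp_deg[OF sf al] unfolding p_def by auto
  have d2: "degree p \<ge> 2"
  proof (rule ccontr)
    assume "\<not> ?thesis"
    hence d1: "degree p = 1" using pp(4) by simp
    have "poly p x = (\<Sum>i\<le>1. coeff p i * x ^ i)" using d1 by (simp add: poly_altdef)
    also have "\<dots> = coeff p 0 + x" using pp(2) d1 by simp
    finally have "x = - coeff p 0" using pp(3) by (simp add: eq_neg_iff_add_eq_0 add.commute)
    thus False using x pp(1) subr_uminus[OF sr] polyin_def by metis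
  qed
  have dn: "pderiv p \<noteq> 0" using d2 pderiv_eq_0_iff[of p] by simp
  have "poly (pderiv p) x \<noteq> 0"
  proof
    assume "poly (pderiv p) x = 0"
    hence "degree p \<le> degree (pderiv p)" using pp(5)[OF dn polyin_pderiv[OF sr pp(1)]] by blast
    thus False using degree_pderiv[of p] d2 by simp
  qed
  moreover obtain q where q: "p = [:-x,1:] * q" using pp(3) poly_eq_0_iff_dvd by (metis dvdE)
  moreover have "pderiv ([:-x,1:] * q) = [:-x,1:] * pderiv q + q * pderiv [:-x,1:]" by (rule pderiv_mult)
  moreover have "pderiv [:-x,1:] = 1" by (simp add: pderiv_pCons)
  moreover have "poly ([:-x,1:] * pderiv q + q * 1) x = poly q x" by simp
  ultimately have qx: "poly q x \<noteq> 0" by metis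
  have "q \<noteq> 0" using qx by auto
  hence "degree q = degree p - 1" using q degree_mult_eq[of "[:-x,1:]" q] by simp
  hence "degree q > 0" using d2 by simp
  then obtain x' where "poly q x' = 0" using alg_closed_imp_poly_has_root by blast
  moreover have "x' \<noteq> x" using qx calculation by auto
  ultimately show ?thesis using q unfolding p_def by auto
qed

lemma fix_lemma:
  fixes E :: "'a::{alg_closed_field,field_char_0} set"
  assumes sf: "is_subfield E" and al: "algover E" and x: "x \<notin> E"
  shows "\<exists>t. homon (adjs (adj E x) gs) t \<and> (\<forall>y\<in>E. t y = y) \<and> t x \<noteq> x"
proof -
  obtain x' where x': "x' \<noteq> x" "poly (mp E x) x' = 0" using second_root[OF assms] by blast
  obtain t0 where t0: "homon (adj E x) t0" "\<forall>y\<in>E. t0 y = y" "t0 x = x'"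
    using ext_hom[OF sf al homon_id, of x x'] x'(2) by auto
  have "is_subfield (adj E x)" "algover (adj E x)" "E \<subseteq> adj E x" "x \<in> adj E x"
    using sf al adj_sf algover_mono E_sub_adj g_in_adj sf_subr by blast+
  from adjs_ext[OF this(1,2) t0(1)] obtain t where
    A: "homon (adjs (adj E x) gs) t" "\<forall>y\<in>adj E x. t y = t0 y" by blast
  show ?thesis by (rule exI[of _ t]) (use A t0 \<open>E \<subseteq> adj E x\<close> \<open>x \<in> adj E x\<close> x'(1) in auto)
qed

definition prim :: "nat \<Rightarrow> 'a::field \<Rightarrow> bool" where
  "prim n z \<longleftrightarrow> (\<forall>k. z ^ k = 1 \<longleftrightarrow> n dvd k)"

lemma prim_iff: "prim n z \<Longrightarrow> z ^ k = 1 \<longleftrightarrow> n dvd k"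
  unfolding prim_def by (erule allE)

lemma pow_gcd:
  fixes z :: "'a::field"
  assumes "z ^ a = 1" "z ^ b = 1"
  shows "z ^ gcd a b = 1"
proof (cases "a = 0")
  case True thus ?thesis using assms by simp
next
  case False
  then obtain x y where xy: "a * x = b * y + gcd a b" using bezout_nat by blast
  have "1 = z ^ (a * x)" using assms by (simp add: power_mult)
  also have "\<dots> = z ^ (b * y) * z ^ gcd a b" using xy by (simp add: power_add)
  also have "\<dots> = z ^ gcd a b" using assms by (simp add: power_mult)
  finally show ?thesis by simp
qed

lemma deg_mc: "m > 0 \<Longrightarrow> degree (monom (1::'a::field) m - [:c:]) = m"
proof -
  assume m: "m > 0"
  have eq: "monom (1::'a) m - [:c:] = monom 1 m + [:- c:]" by simp
  have d: "degree (monom (1::'a) m + [:- c:]) = m"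
    by (rule trans[OF degree_add_eq_left]) (use m in \<open>simp_all add: degree_monom_eq\<close>)
  show ?thesis unfolding eq using d .
qed

lemma prim_pp:
  fixes dummy :: "'a::{alg_closed_field,field_char_0}"
  assumes p: "prime p" and a: "a \<ge> 1"
  shows "\<exists>y::'a. prim (p ^ a) y"
proof -
  have p2: "p \<ge> 2" using p prime_ge_2_nat by blast
  define m where "m = p ^ (a - 1)"
  have m1: "m \<ge> 1" unfolding m_def using p2 by simp
  define Psi :: "'a poly" where "Psi = (\<Sum>j<p. monom 1 j)"
  have "coeff Psi (p - 1) = 1" unfolding Psi_def coeff_sum using p2
    by (simp add: sum.delta'[of "{..<p}" "p - 1" "\<lambda>_. 1", simplified] if_distrib cong: if_cong)
  hence "p - 1 \<le> degree Psi" using le_degree[of Psi "p - 1"] by simp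
  hence "degree Psi > 0" using p2 by simp
  then obtain z where "poly Psi z = 0" using alg_closed_imp_poly_has_root by blast
  hence zs: "(\<Sum>j<p. z ^ j) = 0" unfolding Psi_def by (simp add: poly_sum poly_monom)
  have z1: "z \<noteq> 1"
  proof
    assume "z = 1"
    hence "(of_nat p :: 'a) = 0" using zs by simp
    thus False using p2 by simp
  qed
  have zp: "z ^ p = 1" using zs z1 sum_gp_strict[of z p] by (simp split: if_splits)
  have "degree (monom (1::'a) m - [:z:]) = m" using m1 deg_mc[of m z] by simp
  hence "degree (monom (1::'a) m - [:z:]) > 0" using m1 by simp
  then obtain y where "poly (monom (1::'a) m - [:z:]) y = 0"
    using alg_closed_imp_poly_has_root by blast
  hence ym: "y ^ m = z" by (simp add: poly_monom)
  have pa: "p ^ a = m * p" unfolding m_def using a by (cases a) (auto simp: power_Suc2)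
  have y1: "y ^ (p ^ a) = 1" using pa ym zp by (simp add: power_mult)
  have "prim (p ^ a) y" unfolding prim_def
  proof (intro allI iffI)
    fix k assume yk: "y ^ k = 1"
    have "y ^ gcd k (p ^ a) = 1" using pow_gcd[OF yk y1] .
    moreover obtain i where i: "i \<le> a" "gcd k (p ^ a) = p ^ i"
      using divides_primepow_nat[OF p, of "gcd k (p ^ a)" a] by auto
    ultimately have yi: "y ^ (p ^ i) = 1" by simp
    have "i = a"
    proof (rule ccontr)
      assume "i \<noteq> a"
      hence "p ^ i dvd m" unfolding m_def using i(1) by (simp add: le_imp_power_dvd)
      then obtain c where "m = p ^ i * c" by blast
      hence "y ^ m = 1" using yi by (simp add: power_mult)
      thus False using ym z1 by simp
    qed
    thus "p ^ a dvd k" using i by (metis gcd_dvd1)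
  next
    fix k assume "p ^ a dvd k"
    then obtain c where "k = p ^ a * c" by blast
    thus "y ^ k = 1" using y1 by (simp add: power_mult)
  qed
  thus ?thesis by blast
qed

lemma prim_mult:
  fixes x y :: "'a::field"
  assumes px: "prim a x" and py: "prim b y" and c: "coprime a b"
  shows "prim (a * b) (x * y)"
proof -
  have X: "x ^ k = 1 \<longleftrightarrow> a dvd k" for k using prim_iff[OF px] .
  have Y: "y ^ k = 1 \<longleftrightarrow> b dvd k" for k using prim_iff[OF py] .
  have xa: "x ^ a = 1" using X by simp
  have yb: "y ^ b = 1" using Y by simp
  have "(x * y) ^ k = 1 \<longleftrightarrow> a * b dvd k" for k
  proof
    assume k: "(x * y) ^ k = 1"
    have "x ^ (k * a) = 1" using X by simp
    moreover have "(x * y) ^ (k * a) = 1" using k by (simp add: power_mult)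
    ultimately have "y ^ (k * a) = 1" by (simp add: power_mult_distrib)
    hence "b dvd k * a" using Y by simp
    moreover have "coprime b a" using c by (simp add: coprime_commute)
    ultimately have bk: "b dvd k" using coprime_dvd_mult_left_iff[of b a k] by blast
    have "y ^ (k * b) = 1" using Y by simp
    moreover have "(x * y) ^ (k * b) = 1" using k by (simp add: power_mult)
    ultimately have "x ^ (k * b) = 1" by (simp add: power_mult_distrib)
    hence "a dvd k * b" using X by simp
    hence ak: "a dvd k" using c coprime_dvd_mult_left_iff[of a b k] by blast
    show "a * b dvd k" using divides_mult[OF ak bk c] .
  next
    assume "a * b dvd k"
    hence "a dvd k" "b dvd k" by (auto intro: dvd_mult_left dvd_mult_right)
    hence "x ^ k = 1" "y ^ k = 1" using X Y by auto
    thus "(x * y) ^ k = 1" by (simp add: power_mult_distrib)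
  qed
  thus ?thesis unfolding prim_def by blast
qed

lemma prim_ex:
  fixes dummy :: "'a::{alg_closed_field,field_char_0}"
  shows "n > 0 \<Longrightarrow> \<exists>z::'a. prim n z"
proof (induction n rule: less_induct)
  case (less n)
  show ?case
  proof (cases "n = 1")
    case True
    have "prim 1 (1::'a)" unfolding prim_def by simp
    thus ?thesis using True by blast
  next
    case False
    obtain p where p: "prime p" "p dvd n" using prime_factor_nat[OF False] by blast
    have nu: "\<not> is_unit p" using p(1) not_prime_unit by blast
    have nz: "n \<noteq> 0" using less.prems by simp
    obtain y where y: "n = p ^ multiplicity p n * y" "\<not> p dvd y"
      by (rule multiplicity_decompose'[OF nz nu])
    define a where "a = multiplicity p n"
    have a1: "a \<ge> 1"
    proof (rule ccontr)
      assume "\<not> a \<ge> 1" hence "a = 0" by simp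
      thus False using y p(2) a_def by simp
    qed
    have y0: "y > 0" using y(1) nz by (cases "y = 0") auto
    have "p ^ 1 \<le> p ^ a" using a1 prime_ge_2_nat[OF p(1)] by (intro power_increasing) auto
    hence "p ^ a \<ge> 2" using prime_ge_2_nat[OF p(1)] by simp
    hence "1 * y < p ^ a * y" using y0 by (intro mult_strict_right_mono) auto
    hence yn: "y < n" using y a_def by simp
    obtain z1 :: 'a where z1: "prim y z1" using less.IH[OF yn y0] by blast
    obtain z2 :: 'a where z2: "prim (p ^ a) z2" using prim_pp[OF p(1) a1] by blast
    have "coprime (p ^ a) y" using prime_imp_coprime[OF p(1) y(2)] by simp
    have "n = p ^ a * y" using y a_def by simp
    thus ?thesis using prim_mult[OF z2 z1 \<open>coprime (p ^ a) y\<close>] by auto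
  qed
qed

lemma prim_nz: "prim n z \<Longrightarrow> z \<noteq> 0 \<or> n = 0"
proof (rule ccontr)
  assume "prim n z" "\<not> (z \<noteq> 0 \<or> n = 0)"
  hence "z ^ n = 1" "z = 0" "n > 0" using prim_iff[of n z n] by auto
  thus False by (simp add: zero_power)
qed

lemma prim_pow_eq:
  fixes z :: "'a::field"
  assumes z: "prim n z" and n: "n > 0"
  shows "z ^ i = z ^ j \<longleftrightarrow> i mod n = j mod n"
proof -
  have z0: "z \<noteq> 0" using prim_nz[OF z] n by simp
  have *: "z ^ i = z ^ j \<longleftrightarrow> i mod n = j mod n" if ij: "i \<le> j" for i j
  proof -
    have "z ^ j = z ^ i * z ^ (j - i)" using ij by (simp add: power_add[symmetric])
    hence "z ^ i = z ^ j \<longleftrightarrow> z ^ (j - i) = 1" using z0 by auto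
    also have "\<dots> \<longleftrightarrow> n dvd j - i" using prim_iff[OF z] by blast
    also have "\<dots> \<longleftrightarrow> j mod n = i mod n" using mod_eq_dvd_iff_nat[OF ij] by simp
    finally show ?thesis by auto
  qed
  show ?thesis using *[of i j] *[of j i] by (cases "i \<le> j") auto
qed

lemma prim_roots:
  fixes z :: "'a::field"
  assumes z: "prim n z" and n: "n > 0" and x: "x ^ n = 1"
  shows "\<exists>j<n. x = z ^ j"
proof -
  define P :: "'a poly" where "P = monom 1 n - 1"
  have dP: "degree P = n" unfolding P_def using n deg_mc[of n 1] by (simp add: one_pCons)
  have P0: "P \<noteq> 0" using dP n by auto
  define S where "S = (\<lambda>j. z ^ j) ` {..<n}"
  have inj: "inj_on (\<lambda>j. z ^ j) {..<n}"
    unfolding inj_on_def using prim_pow_eq[OF z n] by auto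
  have cS: "card S = n" unfolding S_def using card_image[OF inj] by simp
  have zn: "z ^ n = 1" using prim_iff[OF z, of n] by simp
  have "(z ^ j) ^ n = 1" for j
  proof -
    have "(z ^ j) ^ n = (z ^ n) ^ j" by (metis power_mult mult.commute)
    thus ?thesis using zn by simp
  qed
  hence SR: "S \<subseteq> {x. poly P x = 0}" unfolding S_def P_def by (auto simp: poly_monom)
  have fR: "finite {x. poly P x = 0}" using poly_roots_finite[OF P0] .
  have "card {x. poly P x = 0} \<le> n" using card_poly_roots_bound[OF P0] dP by simp
  hence "S = {x. poly P x = 0}" using card_subset_eq[OF fR SR] card_mono[OF fR SR] cS by simp
  moreover have "poly P x = 0" unfolding P_def using x by (simp add: poly_monom)
  ultimately show ?thesis unfolding S_def by auto
qed

lemma homon_mono: "homon A t \<Longrightarrow> B \<subseteq> A \<Longrightarrow> homon B t"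
  unfolding homon_def by blast

lemma geo_zero:
  fixes \<eta> :: "'a::field"
  assumes "\<eta> ^ n = 1" "\<eta> \<noteq> 1"
  shows "(\<Sum>k<n. \<eta> ^ k) = 0"
  using assms sum_gp_strict[of \<eta> n] by simp

lemma step1:
  fixes M :: "'a::{alg_closed_field,field_char_0} set" and \<alpha> :: "nat \<Rightarrow> 'a"
  assumes sf: "is_subfield M" and al: "algover M" and n: "n > 0"
    and mu: "\<And>\<eta>. \<eta> ^ n = 1 \<Longrightarrow> \<eta> \<in> M"
    and rad: "\<And>i. i \<in> {1..s} \<Longrightarrow> \<alpha> i \<noteq> 0 \<and> \<alpha> i ^ n \<in> M"
    and sum1: "(\<Sum>i\<in>{1..s}. \<alpha> i) = 1"
    and nondeg: "\<forall>I. I \<noteq> {} \<and> I \<subset> {1..s} \<longrightarrow> (\<Sum>i\<in>I. \<alpha> i) \<noteq> 0"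
    and j: "j \<in> {1..s}"
  shows "\<alpha> j \<in> M"
proof (rule ccontr)
  assume aj: "\<alpha> j \<notin> M"
  define gs where "gs = map \<alpha> [1..<Suc s]"
  obtain t where t: "homon (adjs (adj M (\<alpha> j)) gs) t" "\<forall>y\<in>M. t y = y" "t (\<alpha> j) \<noteq> \<alpha> j"
    using fix_lemma[OF sf al aj] by blast
  define L where "L = adjs (adj M (\<alpha> j)) gs"
  have sfa: "is_subfield (adj M (\<alpha> j))" "algover (adj M (\<alpha> j))" "M \<subseteq> adj M (\<alpha> j)"
    using sf al adj_sf algover_mono E_sub_adj sf_subr by blast+
  have Lp: "is_subfield L" "adj M (\<alpha> j) \<subseteq> L" "set gs \<subseteq> L"
    using adjs_props[OF sfa(1,2), of gs] unfolding L_def by auto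
  have MsubL: "M \<subseteq> L" using Lp sfa by blast
  have aL: "\<alpha> i \<in> L" if "i \<in> {1..s}" for i
  proof -
    have "i \<in> set [1..<Suc s]" using that by auto
    hence "\<alpha> i \<in> set gs" unfolding gs_def by (simp only: set_map) (rule imageI)
    thus ?thesis using Lp(3) by blast
  qed
  have h: "homon L t" using t L_def by simp
  have srL: "subr L" using Lp sf_subr by blast
  define \<eta> where "\<eta> i = t (\<alpha> i) / \<alpha> i" for i
  have ta: "t (\<alpha> i) = \<eta> i * \<alpha> i" if "i \<in> {1..s}" for i using rad[OF that] \<eta>_def by simp
  have en: "\<eta> i ^ n = 1" if i: "i \<in> {1..s}" for i
  proof -
    have "t (\<alpha> i) ^ n = t (\<alpha> i ^ n)" using hom_power[OF Lp(1) h aL[OF i]] by simp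
    also have "\<dots> = \<alpha> i ^ n" using t(2) rad[OF i] by blast
    finally show ?thesis using rad[OF i] unfolding \<eta>_def by (simp add: power_divide)
  qed
  have eM: "\<eta> i ^ k \<in> M" if "i \<in> {1..s}" for i k
  proof -
    have "(\<eta> i ^ k) ^ n = (\<eta> i ^ n) ^ k" by (metis power_mult mult.commute)
    thus ?thesis using mu[of "\<eta> i ^ k"] en[OF that] by simp
  qed
  have S: "(\<Sum>i\<in>{1..s}. \<eta> i ^ k * \<alpha> i) = 1" for k
  proof (induction k)
    case 0 thus ?case using sum1 by simp
  next
    case (Suc k)
    have mem: "\<eta> i ^ k * \<alpha> i \<in> L" if "i \<in> {1..s}" for i
      using subr_mult[OF srL] eM[OF that] MsubL aL[OF that] by blast
    have "1 = t 1" using hom_1[OF Lp(1) h] by simp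
    also have "\<dots> = t (\<Sum>i\<in>{1..s}. \<eta> i ^ k * \<alpha> i)" using Suc by simp
    also have "\<dots> = (\<Sum>i\<in>{1..s}. t (\<eta> i ^ k * \<alpha> i))" by (rule hom_sum[OF Lp(1) h]) (rule mem)
    also have "\<dots> = (\<Sum>i\<in>{1..s}. \<eta> i ^ Suc k * \<alpha> i)"
    proof (rule sum.cong)
      fix i assume i: "i \<in> {1..s}"
      have "t (\<eta> i ^ k * \<alpha> i) = t (\<eta> i ^ k) * t (\<alpha> i)"
        using hom_mult[OF Lp(1) h] eM[OF i] MsubL aL[OF i] by blast
      also have "\<dots> = \<eta> i ^ k * (\<eta> i * \<alpha> i)" using t(2) eM[OF i] ta[OF i] by simp
      finally show "t (\<eta> i ^ k * \<alpha> i) = \<eta> i ^ Suc k * \<alpha> i" by (simp add: algebra_simps)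
    qed simp
    finally show ?case by simp
  qed
  define I where "I = {i\<in>{1..s}. \<eta> i = 1}"
  have "(of_nat n :: 'a) = (\<Sum>k<n. \<Sum>i\<in>{1..s}. \<eta> i ^ k * \<alpha> i)" using S by simp
  also have "\<dots> = (\<Sum>i\<in>{1..s}. (\<Sum>k<n. \<eta> i ^ k) * \<alpha> i)"
    by (subst sum.swap) (simp add: sum_distrib_right)
  also have "\<dots> = (\<Sum>i\<in>{1..s}. (if \<eta> i = 1 then of_nat n * \<alpha> i else 0))"
    by (rule sum.cong) (auto simp: geo_zero en)
  also have "\<dots> = of_nat n * (\<Sum>i\<in>I. \<alpha> i)"
  proof -
    have "{1..s} \<inter> {i. \<eta> i = 1} = I" unfolding I_def by auto
    thus ?thesis by (simp add: sum.If_cases sum_distrib_left)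
  qed
  finally have sI: "(\<Sum>i\<in>I. \<alpha> i) = 1" using n by (metis mult_cancel_left1 of_nat_eq_0_iff not_gr0)
  have jI: "j \<notin> I" using t(3) ta[OF j] unfolding I_def by auto
  define J where "J = {1..s} - I"
  have "I \<subseteq> {1..s}" unfolding I_def by auto
  hence "(\<Sum>i\<in>J. \<alpha> i) = (\<Sum>i\<in>{1..s}. \<alpha> i) - (\<Sum>i\<in>I. \<alpha> i)"
    unfolding J_def by (simp add: sum_diff)
  hence "(\<Sum>i\<in>J. \<alpha> i) = 0" using sum1 sI by simp
  moreover have "J \<noteq> {}" using j jI J_def by auto
  moreover have "I \<noteq> {}" using sI by auto
  hence "J \<subset> {1..s}" unfolding J_def using \<open>I \<subseteq> {1..s}\<close> by auto
  ultimately show False using nondeg by blast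
qed

lemma adj_mono: "E \<subseteq> F \<Longrightarrow> adj E g \<subseteq> adj F g"
  unfolding adj_def using polyin_mono by blast

context
  fixes K :: "'a::{alg_closed_field,field_char_0} set" and \<zeta> :: 'a and n :: nat
  assumes sfK: "is_subfield K" and alK: "algover K" and z: "prim n \<zeta>" and n: "n > 0"
begin

definition inT :: "('a \<Rightarrow> 'a) \<Rightarrow> bool" where
  "inT t \<longleftrightarrow> homon (adj K \<zeta>) t \<and> (\<forall>x\<in>K. t x = x)"

lemma srK: "subr K" using sfK sf_subr by blast
lemma sfM: "is_subfield (adj K \<zeta>)" using adj_sf[OF sfK alK] .
lemma srM: "subr (adj K \<zeta>)" using sfM sf_subr by blast
lemma KM: "K \<subseteq> adj K \<zeta>" using E_sub_adj[OF srK] .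
lemma zM: "\<zeta> \<in> adj K \<zeta>" using g_in_adj[OF srK] .
lemma zn: "\<zeta> ^ n = 1" using prim_iff[OF z, of n] by simp

lemma zeq: "\<zeta> ^ i = \<zeta> ^ j \<longleftrightarrow> int n dvd int i - int j"
proof -
  have "\<zeta> ^ i = \<zeta> ^ j \<longleftrightarrow> i mod n = j mod n" using prim_pow_eq[OF z n] .
  also have "\<dots> \<longleftrightarrow> int i mod int n = int j mod int n"
    by (metis of_nat_eq_iff of_nat_mod)
  also have "\<dots> \<longleftrightarrow> int n dvd int i - int j" by (rule mod_eq_dvd_iff)
  finally show ?thesis .
qed

lemma inT_hom: "inT t \<Longrightarrow> homon (adj K \<zeta>) t" unfolding inT_def by blast
lemma inT_fix: "inT t \<Longrightarrow> x \<in> K \<Longrightarrow> t x = x" unfolding inT_def by blast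

lemma teval:
  assumes t: "inT t" and g: "polyin K g"
  shows "t (poly g \<zeta>) = poly g (t \<zeta>)"
proof -
  have h: "homon (adj K \<zeta>) t" using inT_hom[OF t] .
  have "t (poly g \<zeta>) = poly (map_poly t g) (t \<zeta>)"
    using poly_map[OF sfM h polyin_mono[OF g KM] zM] .
  moreover have "map_poly t g = g"
    by (rule poly_eqI) (use g inT_fix[OF t] hom_0[OF sfM h] in \<open>auto simp: coeff_map_poly polyin_def\<close>)
  ultimately show ?thesis by simp
qed

lemma tpow: "inT t \<Longrightarrow> x \<in> adj K \<zeta> \<Longrightarrow> t (x ^ k) = t x ^ k"
  using hom_power[OF sfM inT_hom] by blast

lemma tz: "inT t \<Longrightarrow> \<exists>k<n. t \<zeta> = \<zeta> ^ k"
proof -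
  assume t: "inT t"
  have "t \<zeta> ^ n = t (\<zeta> ^ n)" using tpow[OF t zM] by simp
  also have "\<dots> = 1" using zn hom_1[OF sfM inT_hom[OF t]] by simp
  finally show ?thesis using prim_roots[OF z n] by blast
qed

lemma tM: "inT t \<Longrightarrow> x \<in> adj K \<zeta> \<Longrightarrow> t x \<in> adj K \<zeta>"
proof -
  assume t: "inT t" and x: "x \<in> adj K \<zeta>"
  then obtain g where g: "polyin K g" "x = poly g \<zeta>" unfolding adj_def by blast
  obtain k where k: "t \<zeta> = \<zeta> ^ k" using tz[OF t] by blast
  have "t x = poly g (\<zeta> ^ k)" using teval[OF t g(1)] g(2) k by simp
  thus ?thesis using poly_in[OF srM polyin_mono[OF g(1) KM] subr_power[OF srM zM]] by simp
qed

lemma inT_comp: "inT t \<Longrightarrow> inT r \<Longrightarrow> inT (\<lambda>x. t (r x))"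
proof -
  assume t: "inT t" and r: "inT r"
  have ht: "homon (adj K \<zeta>) t" and hr: "homon (adj K \<zeta>) r" using t r inT_hom by blast+
  have "homon (adj K \<zeta>) (\<lambda>x. t (r x))"
    unfolding homon_def
  proof (intro conjI ballI)
    show "t (r 1) = 1" using hom_1[OF sfM hr] hom_1[OF sfM ht] by simp
    fix x y assume xy: "x \<in> adj K \<zeta>" "y \<in> adj K \<zeta>"
    have rxy: "r x \<in> adj K \<zeta>" "r y \<in> adj K \<zeta>" using tM[OF r] xy by blast+
    show "t (r (x + y)) = t (r x) + t (r y)"
      using hom_add[OF sfM hr xy] hom_add[OF sfM ht rxy] by simp
    show "t (r (x * y)) = t (r x) * t (r y)"
      using hom_mult[OF sfM hr xy] hom_mult[OF sfM ht rxy] by simp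
  qed
  moreover have "\<forall>x\<in>K. t (r x) = x" using inT_fix[OF t] inT_fix[OF r] by simp
  ultimately show ?thesis unfolding inT_def by blast
qed

lemma inT_eq: "inT t \<Longrightarrow> inT r \<Longrightarrow> t \<zeta> = r \<zeta> \<Longrightarrow> x \<in> adj K \<zeta> \<Longrightarrow> t x = r x"
proof -
  assume t: "inT t" and r: "inT r" and e: "t \<zeta> = r \<zeta>" and x: "x \<in> adj K \<zeta>"
  then obtain g where g: "polyin K g" "x = poly g \<zeta>" unfolding adj_def by blast
  show ?thesis using teval[OF t g(1)] teval[OF r g(1)] e g(2) by simp
qed

lemma inT_comm:
  assumes t: "inT t" and r: "inT r" and x: "x \<in> adj K \<zeta>"
  shows "t (r x) = r (t x)"
proof -
  obtain a where a: "t \<zeta> = \<zeta> ^ a" using tz[OF t] by blast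
  obtain b where b: "r \<zeta> = \<zeta> ^ b" using tz[OF r] by blast
  have "t (r \<zeta>) = \<zeta> ^ (a * b)" using b tpow[OF t zM] a by (simp add: power_mult)
  moreover have "r (t \<zeta>) = \<zeta> ^ (b * a)" using a tpow[OF r zM] b by (simp add: power_mult)
  ultimately have "t (r \<zeta>) = r (t \<zeta>)" by (simp add: mult.commute)
  thus ?thesis using inT_eq[OF inT_comp[OF t r] inT_comp[OF r t] _ x] by simp
qed

lemma fixK:
  assumes x: "x \<in> adj K \<zeta>" and f: "\<And>t. inT t \<Longrightarrow> t x = x"
  shows "x \<in> K"
proof (rule ccontr)
  assume xK: "x \<notin> K"
  obtain t where t: "homon (adjs (adj K x) [\<zeta>]) t" "\<forall>y\<in>K. t y = y" "t x \<noteq> x"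
    using fix_lemma[OF sfK alK xK, of "[\<zeta>]"] by blast
  have "adj K \<zeta> \<subseteq> adj (adj K x) \<zeta>" using adj_mono E_sub_adj[OF srK] by blast
  hence "homon (adj K \<zeta>) t" using t(1) homon_mono by simp
  hence "inT t" using t(2) unfolding inT_def by blast
  thus False using f t(3) by blast
qed


lemma step2:
  assumes aM: "\<alpha> \<in> adj K \<zeta>" and a0: "\<alpha> \<noteq> 0" and aK: "\<alpha> ^ n \<in> K"
    and wprop: "\<And>u. u \<in> K \<Longrightarrow> u ^ n = 1 \<Longrightarrow> u ^ w = 1"
  shows "\<exists>\<xi>. \<xi> ^ n = 1 \<and> \<alpha> ^ w * \<xi> \<in> K"
proof -
  define kk where "kk t = (SOME k. k < n \<and> t \<zeta> = \<zeta> ^ k)" for t :: "'a \<Rightarrow> 'a"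
  define cc where "cc t = (SOME c. c < n \<and> t \<alpha> = \<zeta> ^ c * \<alpha>)" for t :: "'a \<Rightarrow> 'a"
  have kk: "t \<zeta> = \<zeta> ^ kk t" if t: "inT t" for t
  proof -
    have "\<exists>k. k < n \<and> t \<zeta> = \<zeta> ^ k" using tz[OF t] by blast
    from someI_ex[OF this] show ?thesis unfolding kk_def by blast
  qed
  have cc: "t \<alpha> = \<zeta> ^ cc t * \<alpha>" if t: "inT t" for t
  proof -
    have "t \<alpha> ^ n = t (\<alpha> ^ n)" using tpow[OF t aM] by simp
    also have "\<dots> = \<alpha> ^ n" using inT_fix[OF t aK] .
    finally have "(t \<alpha> / \<alpha>) ^ n = 1" using a0 by (simp add: power_divide)
    then obtain c where "c < n" "t \<alpha> / \<alpha> = \<zeta> ^ c" using prim_roots[OF z n] by blast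
    hence "\<exists>c. c < n \<and> t \<alpha> = \<zeta> ^ c * \<alpha>" using a0 by (metis nonzero_eq_divide_eq)
    from someI_ex[OF this] show ?thesis unfolding cc_def by blast
  qed
  have tzp: "t (\<zeta> ^ m) = \<zeta> ^ (kk t * m)" if t: "inT t" for t m
    using tpow[OF t zM] kk[OF t] by (simp add: power_mult)
  have coc: "int n dvd int (cc r) * (int (kk t) - 1) - int (cc t) * (int (kk r) - 1)"
    if t: "inT t" and r: "inT r" for t r
  proof -
    have zcM: "\<zeta> ^ m \<in> adj K \<zeta>" for m using subr_power[OF srM zM] .
    have "t (r \<alpha>) = t (\<zeta> ^ cc r) * t \<alpha>"
      using cc[OF r] hom_mult[OF sfM inT_hom[OF t] zcM aM] by simp
    also have "\<dots> = \<zeta> ^ (kk t * cc r + cc t) * \<alpha>" using tzp[OF t] cc[OF t] by (simp add: power_add)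
    finally have 1: "t (r \<alpha>) = \<zeta> ^ (kk t * cc r + cc t) * \<alpha>" .
    have "r (t \<alpha>) = r (\<zeta> ^ cc t) * r \<alpha>"
      using cc[OF t] hom_mult[OF sfM inT_hom[OF r] zcM aM] by simp
    also have "\<dots> = \<zeta> ^ (kk r * cc t + cc r) * \<alpha>" using tzp[OF r] cc[OF r] by (simp add: power_add)
    finally have 2: "r (t \<alpha>) = \<zeta> ^ (kk r * cc t + cc r) * \<alpha>" .
    have "\<zeta> ^ (kk t * cc r + cc t) = \<zeta> ^ (kk r * cc t + cc r)"
      using 1 2 inT_comm[OF t r aM] a0 by simp
    hence "int n dvd int (kk t * cc r + cc t) - int (kk r * cc t + cc r)" using zeq by blast
    moreover have "int (kk t * cc r + cc t) - int (kk r * cc t + cc r)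
        = int (cc r) * (int (kk t) - 1) - int (cc t) * (int (kk r) - 1)"
      by (simp add: algebra_simps)
    ultimately show ?thesis by simp
  qed
  define J where "J = {j::int. \<exists>e. \<forall>t. inT t \<longrightarrow> int n dvd j * int (cc t) - e * (int (kk t) - 1)}"
  have J0: "int n \<in> J" unfolding J_def by (rule CollectI, rule exI[of _ 0]) simp
  have Jsub: "a - q * b \<in> J" if aJ: "a \<in> J" and bJ: "b \<in> J" for a b q
  proof -
    obtain ea where ea: "\<forall>t. inT t \<longrightarrow> int n dvd a * int (cc t) - ea * (int (kk t) - 1)"
      using aJ unfolding J_def by blast
    obtain eb where eb: "\<forall>t. inT t \<longrightarrow> int n dvd b * int (cc t) - eb * (int (kk t) - 1)"
      using bJ unfolding J_def by blast
    have "\<forall>t. inT t \<longrightarrow> int n dvd (a - q * b) * int (cc t) - (ea - q * eb) * (int (kk t) - 1)"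
    proof (intro allI impI)
      fix t assume t: "inT t"
      have "(a - q * b) * int (cc t) - (ea - q * eb) * (int (kk t) - 1)
          = (a * int (cc t) - ea * (int (kk t) - 1)) - q * (b * int (cc t) - eb * (int (kk t) - 1))"
        by (simp add: algebra_simps)
      thus "int n dvd (a - q * b) * int (cc t) - (ea - q * eb) * (int (kk t) - 1)"
        using ea eb t by (metis dvd_diff dvd_mult)
    qed
    thus ?thesis unfolding J_def by blast
  qed
  have Jz: "0 \<in> J" using Jsub[OF J0 J0, of 1] by simp
  have Jmul: "q * b \<in> J" if "b \<in> J" for q b using Jsub[OF Jz that, of "- q"] by simp
  have Jk: "int (kk r) - 1 \<in> J" if r: "inT r" for r
  proof -
    have "\<forall>t. inT t \<longrightarrow> int n dvd (int (kk r) - 1) * int (cc t) - int (cc r) * (int (kk t) - 1)"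
    proof (intro allI impI)
      fix t assume t: "inT t"
      have "int n dvd - (int (cc r) * (int (kk t) - 1) - int (cc t) * (int (kk r) - 1))"
        using coc[OF t r] by (simp only: dvd_minus_iff)
      thus "int n dvd (int (kk r) - 1) * int (cc t) - int (cc r) * (int (kk t) - 1)"
        by (simp add: algebra_simps)
    qed
    thus ?thesis unfolding J_def by blast
  qed
  define d where "d = (LEAST d::nat. d > 0 \<and> int d \<in> J)"
  have dex: "\<exists>d::nat. d > 0 \<and> int d \<in> J" using J0 n by blast
  have dJ: "d > 0" "int d \<in> J" using LeastI_ex[OF dex] unfolding d_def by blast+
  have Jdvd: "int d dvd j" if j: "j \<in> J" for j
  proof -
    have m: "j mod int d \<in> J" using Jsub[OF j dJ(2), of "j div int d"] by (simp add: minus_div_mult_eq_mod)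
    have "j mod int d = 0"
    proof (rule ccontr)
      assume ne: "j mod int d \<noteq> 0"
      have "j mod int d \<ge> 0" "j mod int d < int d" using dJ(1) by simp_all
      hence "nat (j mod int d) > 0" "int (nat (j mod int d)) \<in> J" "nat (j mod int d) < d"
        using ne m by auto
      thus False using not_less_Least[of "nat (j mod int d)" "\<lambda>d. d > 0 \<and> int d \<in> J"] unfolding d_def by blast
    qed
    thus ?thesis by (simp add: dvd_eq_mod_eq_0)
  qed
  have dn: "d dvd n" using Jdvd[OF J0] by simp
  define m where "m = n div d"
  have nm: "n = d * m" using dn unfolding m_def by simp
  have m0: "m > 0" using nm n by (cases m) auto
  define x0 where "x0 = \<zeta> ^ m"
  have x0M: "x0 \<in> adj K \<zeta>" unfolding x0_def using subr_power[OF srM zM] .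
  have "t x0 = x0" if t: "inT t" for t
  proof -
    obtain q where q: "int (kk t) - 1 = int d * q" using Jdvd[OF Jk[OF t]] by (elim dvdE)
    have "int (kk t * m) - int m = (int (kk t) - 1) * int m" by (simp add: algebra_simps)
    also have "\<dots> = q * int n" using q nm by (simp add: algebra_simps)
    finally have "int n dvd int (kk t * m) - int m" by simp
    hence "\<zeta> ^ (kk t * m) = \<zeta> ^ m" using zeq by blast
    thus ?thesis unfolding x0_def using tzp[OF t] by simp
  qed
  hence x0K: "x0 \<in> K" using fixK[OF x0M] by blast
  have "x0 ^ n = 1" unfolding x0_def using zn by (metis power_mult mult.commute power_one)
  hence "x0 ^ w = 1" using wprop x0K by blast
  hence "\<zeta> ^ (m * w) = 1" unfolding x0_def by (simp add: power_mult)
  hence "n dvd m * w" using prim_iff[OF z] by blast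
  hence "d * m dvd w * m" using nm by (simp add: mult.commute)
  hence "d dvd w" using m0 by simp
  then obtain q where "w = d * q" by blast
  hence "int w \<in> J" using Jmul[OF dJ(2), of "int q"] by (simp add: mult.commute)
  then obtain e where e: "\<forall>t. inT t \<longrightarrow> int n dvd int w * int (cc t) - e * (int (kk t) - 1)"
    unfolding J_def by blast
  define e' where "e' = nat ((- e) mod int n)"
  have ie': "int e' = (- e) mod int n" unfolding e'_def using n by simp
  have ee: "int n dvd int e' + e"
  proof -
    have "int e' + e = (- e) mod int n - (- e)" using ie' by simp
    also have "\<dots> = - ((- e) div int n * int n)" by (simp add: minus_div_mult_eq_mod[symmetric])
    finally show ?thesis by simp
  qed
  define \<xi> where "\<xi> = \<zeta> ^ e'"
  have xin: "\<xi> ^ n = 1" unfolding \<xi>_def using zn by (metis power_mult mult.commute power_one)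
  define x where "x = \<alpha> ^ w * \<xi>"
  have xM: "x \<in> adj K \<zeta>" unfolding x_def \<xi>_def
    using subr_mult[OF srM subr_power[OF srM aM] subr_power[OF srM zM]] .
  have "t x = x" if t: "inT t" for t
  proof -
    have h: "homon (adj K \<zeta>) t" using inT_hom[OF t] .
    have "t x = t (\<alpha> ^ w) * t \<xi>"
      unfolding x_def \<xi>_def using hom_mult[OF sfM h subr_power[OF srM aM] subr_power[OF srM zM]] .
    also have "\<dots> = (\<zeta> ^ cc t * \<alpha>) ^ w * \<zeta> ^ (kk t * e')"
      using tpow[OF t aM] cc[OF t] tzp[OF t] unfolding \<xi>_def by simp
    also have "\<dots> = \<alpha> ^ w * \<zeta> ^ (cc t * w + kk t * e')"
    proof -
      have "(\<zeta> ^ cc t * \<alpha>) ^ w = \<zeta> ^ (cc t * w) * \<alpha> ^ w" by (simp add: power_mult_distrib power_mult)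
      thus ?thesis by (simp add: power_add)
    qed
    also have "\<zeta> ^ (cc t * w + kk t * e') = \<zeta> ^ e'"
    proof -
      have A: "int (cc t * w + kk t * e') - int e'
          = (int w * int (cc t) - e * (int (kk t) - 1)) + (int (kk t) - 1) * (int e' + e)"
        by (simp add: algebra_simps)
      have B: "int n dvd (int w * int (cc t) - e * (int (kk t) - 1)) + (int (kk t) - 1) * (int e' + e)"
        using e t ee by (metis dvd_add dvd_mult)
      have "int n dvd int (cc t * w + kk t * e') - int e'" by (subst A) (rule B)
      thus ?thesis using zeq by blast
    qed
    finally show ?thesis unfolding x_def \<xi>_def by simp
  qed
  hence "x \<in> K" using fixK[OF xM] by blast
  thus ?thesis using xin unfolding x_def by blast
qed

end

lemma rou_mult: "root_of_unity (a::'a::field) \<Longrightarrow> root_of_unity b \<Longrightarrow> root_of_unity (a * b)"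
proof -
  assume "root_of_unity a" "root_of_unity b"
  then obtain m k where mk: "m > 0" "a ^ m = 1" "k > 0" "b ^ k = 1" unfolding root_of_unity_def by blast
  have "(a * b) ^ (m * k) = (a ^ m) ^ k * (b ^ k) ^ m"
    by (simp add: power_mult_distrib power_mult[symmetric] mult.commute)
  thus ?thesis unfolding root_of_unity_def using mk by (intro exI[of _ "m * k"]) simp
qed

lemma rou_nz: "root_of_unity (a::'a::field) \<Longrightarrow> a \<noteq> 0"
  unfolding root_of_unity_def by (auto simp: zero_power)

lemma rou_pow_card:
  fixes z :: "'a::field"
  assumes fin: "finite {z::'a. root_of_unity z}" and z: "root_of_unity z"
  shows "z ^ card {z::'a. root_of_unity z} = 1"
proof -
  define U where "U = {z::'a. root_of_unity z}"
  define f where "f u = z * u" for u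
  have inj: "inj_on f U" unfolding inj_on_def f_def using rou_nz[OF z] by simp
  have sub: "f ` U \<subseteq> U" unfolding f_def U_def using rou_mult[OF z] by auto
  have fU: "finite U" using fin U_def by simp
  have eq: "f ` U = U" using card_subset_eq[OF fU sub] card_image[OF inj] by simp
  have "prod (\<lambda>u. u) U = prod (\<lambda>u. u) (f ` U)" using eq by simp
  also have "\<dots> = prod f U" using prod.reindex[OF inj, of "\<lambda>u. u"] by simp
  also have "\<dots> = z ^ card U * prod (\<lambda>u. u) U" unfolding f_def by (simp only: prod.distrib prod_constant)
  finally have "1 * prod (\<lambda>u. u) U = z ^ card U * prod (\<lambda>u. u) U" by simp
  moreover have "prod (\<lambda>u. u) U \<noteq> 0"
  proof -
    have "0 \<notin> U" using rou_nz unfolding U_def by blast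
    thus ?thesis using prod_zero_iff[OF fU, of "\<lambda>u. u"] by auto
  qed
  ultimately have "z ^ card U = 1" using mult_right_cancel[of "prod (\<lambda>u. u) U" 1 "z ^ card U"] by simp
  thus ?thesis unfolding U_def .
qed

lemma K_sf: "is_subfield (range (to_ac :: 'k::field \<Rightarrow> 'k alg_closure))"
  unfolding is_subfield_def
proof (intro conjI ballI)
  show "0 \<in> range (to_ac :: 'k \<Rightarrow> 'k alg_closure)" by (metis rangeI to_ac_0)
  show "1 \<in> range (to_ac :: 'k \<Rightarrow> 'k alg_closure)" by (metis rangeI to_ac_1)
  fix x y assume "x \<in> range (to_ac :: 'k \<Rightarrow> 'k alg_closure)" "y \<in> range (to_ac :: 'k \<Rightarrow> 'k alg_closure)"
  then obtain a b where ab: "x = to_ac a" "y = to_ac b" by blast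
  show "x + y \<in> range (to_ac :: 'k \<Rightarrow> 'k alg_closure)" using ab by (metis rangeI to_ac_add)
  show "x * y \<in> range (to_ac :: 'k \<Rightarrow> 'k alg_closure)" using ab by (metis rangeI to_ac_mult)
  show "- x \<in> range (to_ac :: 'k \<Rightarrow> 'k alg_closure)" using ab by (metis rangeI to_ac_minus)
  show "inverse x \<in> range (to_ac :: 'k \<Rightarrow> 'k alg_closure)" using ab by (metis rangeI to_ac_inverse)
qed

lemma K_alg: "algover (range (to_ac :: 'k::field \<Rightarrow> 'k alg_closure))"
  unfolding algover_def
proof
  fix y :: "'k alg_closure"
  obtain p :: "'k poly" where p: "p \<noteq> 0" "poly (map_poly to_ac p) y = 0" by (rule alg_closure_algebraic)
  have "map_poly to_ac p \<noteq> 0"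
  proof
    assume "map_poly to_ac p = 0"
    hence "coeff (map_poly to_ac p) (degree p) = 0" by simp
    thus False using p(1) by (simp add: coeff_map_poly)
  qed
  moreover have "polyin (range to_ac) (map_poly to_ac p)"
    unfolding polyin_def by (simp add: coeff_map_poly)
  ultimately show "\<exists>q. q \<noteq> 0 \<and> polyin (range to_ac) q \<and> poly q y = 0" using p(2) by blast
qed

theorem corollary1p4:
  fixes \<alpha> :: "nat \<Rightarrow> 'k::field_char_0 alg_closure" and s :: nat
  assumes fg: "finitely_generated_field TYPE('k)"
    and Gamma: "\<forall>i\<in>{1..s}. \<alpha> i \<in>
       {x :: 'k alg_closure. x \<noteq> 0 \<and> (\<exists>n::nat. n > 0 \<and> x ^ n \<in> to_ac ` (UNIV - {0}))}"
    and sum1: "(\<Sum>i\<in>{1..s}. \<alpha> i) = 1"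
    and nondeg: "\<forall>I. I \<noteq> {} \<and> I \<subset> {1..s} \<longrightarrow> (\<Sum>i\<in>I. \<alpha> i) \<noteq> 0"
  shows "\<exists>\<xi> :: nat \<Rightarrow> 'k alg_closure. \<forall>i\<in>{1..s}.
           \<xi> i \<noteq> 0 \<and> root_of_unity (\<xi> i) \<and>
           \<alpha> i ^ card {z :: 'k. root_of_unity z} * \<xi> i \<in> range to_ac"
proof (cases "card {z :: 'k. root_of_unity z} = 0")
  case True
  have "root_of_unity (1 :: 'k alg_closure)" unfolding root_of_unity_def by (intro exI[of _ 1]) simp
  moreover have "(1 :: 'k alg_closure) \<in> range to_ac" by (metis rangeI to_ac_1)
  ultimately show ?thesis using True by (intro exI[of _ "\<lambda>_. 1"]) simp
next
  case False
  define w where "w = card {z :: 'k. root_of_unity z}"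
  have fin: "finite {z :: 'k. root_of_unity z}"
  proof (rule ccontr)
    assume "infinite {z :: 'k. root_of_unity z}"
    hence "card {z :: 'k. root_of_unity z} = 0" by (rule card.infinite)
    thus False using False by simp
  qed
  define K where "K = range (to_ac :: 'k \<Rightarrow> 'k alg_closure)"
  have sfK: "is_subfield K" unfolding K_def by (rule K_sf)
  have alK: "algover K" unfolding K_def by (rule K_alg)
  have srK: "subr K" using sfK sf_subr by blast
  have "\<forall>i\<in>{1..s}. \<exists>m. m > 0 \<and> \<alpha> i ^ m \<in> K"
  proof
    fix i assume "i \<in> {1..s}"
    hence "\<exists>m::nat. m > 0 \<and> \<alpha> i ^ m \<in> to_ac ` (UNIV - {0})" using Gamma by simp
    thus "\<exists>m. m > 0 \<and> \<alpha> i ^ m \<in> K" unfolding K_def by blast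
  qed
  from bchoice[OF this] obtain nn where nn0: "\<forall>i\<in>{1..s}. nn i > 0 \<and> \<alpha> i ^ nn i \<in> K" by blast
  have nn: "nn i > 0 \<and> \<alpha> i ^ nn i \<in> K" if "i \<in> {1..s}" for i using nn0 that by blast
  define N where "N = (\<Prod>i\<in>{1..s}. nn i)"
  have N0: "N > 0" unfolding N_def using nn by (intro prod_pos) blast
  have aK: "\<alpha> i ^ N \<in> K" if i: "i \<in> {1..s}" for i
  proof -
    have "nn i dvd N" unfolding N_def using i by (intro dvd_prodI) auto
    then obtain q where "N = nn i * q" by blast
    hence "\<alpha> i ^ N = (\<alpha> i ^ nn i) ^ q" by (simp add: power_mult)
    thus ?thesis using subr_power[OF srK] nn[OF i] by simp
  qed
  have a0: "\<alpha> i \<noteq> 0" if "i \<in> {1..s}" for i using Gamma that by simp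
  obtain \<zeta> :: "'k alg_closure" where z: "prim N \<zeta>" using prim_ex N0 by blast
  define M where "M = adj K \<zeta>"
  have sfM: "is_subfield M" unfolding M_def using adj_sf[OF sfK alK] .
  have srM: "subr M" using sfM sf_subr by blast
  have KM: "K \<subseteq> M" unfolding M_def using E_sub_adj[OF srK] .
  have alM: "algover M" using algover_mono[OF alK KM] .
  have mu: "\<eta> \<in> M" if eN: "\<eta> ^ N = 1" for \<eta>
  proof -
    obtain j where "\<eta> = \<zeta> ^ j" using prim_roots[OF z N0 eN] by blast
    thus ?thesis using subr_power[OF srM] g_in_adj[OF srK] unfolding M_def by simp
  qed
  have aM: "\<alpha> i \<in> M" if i: "i \<in> {1..s}" for i
  proof (rule step1[OF sfM alM N0 mu _ sum1 nondeg i])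
    fix j assume j: "j \<in> {1..s}"
    show "\<alpha> j \<noteq> 0 \<and> \<alpha> j ^ N \<in> M" using a0[OF j] aK[OF j] KM by blast
  qed
  have wprop: "u ^ w = 1" if u: "u \<in> K" "u ^ N = 1" for u
  proof -
    obtain v where v: "u = to_ac v" using u(1) unfolding K_def by blast
    have "to_ac (v ^ N) = to_ac 1" using u(2) v by simp
    hence "v ^ N = 1" by (simp only: to_ac_eq_iff)
    hence "root_of_unity v" unfolding root_of_unity_def using N0 by blast
    hence "v ^ w = 1" unfolding w_def using rou_pow_card[OF fin] by blast
    thus ?thesis using v by (metis to_ac_1 to_ac_power)
  qed
  have "\<forall>i\<in>{1..s}. \<exists>\<xi>. \<xi> ^ N = 1 \<and> \<alpha> i ^ w * \<xi> \<in> K"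
  proof
    fix i assume i: "i \<in> {1..s}"
    show "\<exists>\<xi>. \<xi> ^ N = 1 \<and> \<alpha> i ^ w * \<xi> \<in> K"
      using step2[OF sfK alK z N0 aM[OF i, unfolded M_def] a0[OF i] aK[OF i] wprop] .
  qed
  from bchoice[OF this] obtain \<xi> where xi0: "\<forall>i\<in>{1..s}. \<xi> i ^ N = 1 \<and> \<alpha> i ^ w * \<xi> i \<in> K" by blast
  have xi: "\<xi> i ^ N = 1 \<and> \<alpha> i ^ w * \<xi> i \<in> K" if "i \<in> {1..s}" for i using xi0 that by blast
  show ?thesis
  proof (intro exI[of _ \<xi>] ballI conjI)
    fix i assume i: "i \<in> {1..s}"
    show "root_of_unity (\<xi> i)" unfolding root_of_unity_def using xi[OF i] N0 by blast
    thus "\<xi> i \<noteq> 0" by (rule rou_nz)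
    show "\<alpha> i ^ card {z :: 'k. root_of_unity z} * \<xi> i \<in> range to_ac"
      using xi[OF i] unfolding w_def K_def by blast
  qed
qed

end
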